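(* Let $n\ge2$, $\xi_n=\frac{n+1}{n-1}$, $\rho\in\mathbb{C}\setminus\{-\xi_n,-1,1,\xi_n\}$, and let $z_0,\dots,z_{2n-1}$ be the $2n$ zeros (with multiplicity) of $p_{2n}(\rho,z)$. Then $z_k\neq\pm1$ for all $k$. Furthermore each $z_k$ is of exactly one of the following two (mutually exclusive) types: Type 1: $s_{n+1}(\rho,z_k)=s_{n+1}(\rho,z_k^{-1})=0$; in this case $$\lambda_k=\frac{z_k^{1-n}(1-\rho^2)}{(z_k-\rho)^2}=\frac{z_k^{n+1}(1-\rho^2)}{(1-\rho z_k)^2}$$ is an eigenvalue (called a type-1 eigenvalue) of $K_n(\rho)$. Type 2: $c_{n+1}(\rho,z_k)=c_{n+1}(\rho,z_k^{-1})=0$; in this case $$\lambda_k=-\frac{z_k^{1-n}(1-\rho^2)}{(z_k-\rho)^2}=-\frac{z_k^{n+1}(1-\rho^2)}{(1-\rho z_k)^2}$$ is an eigenvalue (called a type-2 eigenvalue) of $K_n(\rho)$. There are $2\lfloor n/2\rfloor$ type-1 zeros and $2\lceil n/2\rceil$ type-2 zeros, corresponding (each inverse pair $\{z_k,z_k^{-1}\}$ giving one eigenvalue) to $\lfloor n/2\rfloor$ type-1 eigenvalues and $\lceil n/2\rceil$ type-2 eigenvalues.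
   Context: $K_n(\rho)=\left[\rho^{|j-k|}\right]_{j,k=1}^n$ (with $\rho^0=1$). $p_{2n}(\rho,z)=z^{2n}+(1+\rho^2)\sum_{k=1}^{n-1}z^{2k}-2\rho\sum_{k=0}^{n-1}z^{2k+1}+1$; $s_{n+1}(\rho,z)=z^{n+1}-\rho z^n+\rho z-1$; $c_{n+1}(\rho,z)=z^{n+1}-\rho z^n-\rho z+1$; for $z\neq\pm1$, $p_{2n}(\rho,z)=\frac{s_{n+1}(\rho,z)c_{n+1}(\rho,z)}{z^2-1}$. Zeros are counted with multiplicity. *)

theory Defs
  imports "HOL-Computational_Algebra.Polynomial" "Jordan_Normal_Form.Char_Poly"
begin

text \<open>Kac-Murdock-Szego matrix K_n(rho) = [rho^|j-k|] (0-based indices).\<close>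
definition KMS :: "nat \<Rightarrow> complex \<Rightarrow> complex mat" where
  "KMS n \<rho> = mat n n (\<lambda>(j,k). \<rho> ^ (if k \<le> j then j - k else k - j))"

definition p2n :: "nat \<Rightarrow> complex \<Rightarrow> complex poly" where
  "p2n n \<rho> = Polynomial.monom 1 (2*n)
      + Polynomial.smult (1 + \<rho>^2) (\<Sum>k\<in>{1..n-1}. Polynomial.monom 1 (2*k))
      - Polynomial.smult (2*\<rho>) (\<Sum>k\<in>{0..n-1}. Polynomial.monom 1 (2*k+1)) + 1"

definition s_fun :: "nat \<Rightarrow> complex \<Rightarrow> complex \<Rightarrow> complex" where
  "s_fun m \<rho> z = z^m - \<rho> * z^(m-1) + \<rho> * z - 1"

definition c_fun :: "nat \<Rightarrow> complex \<Rightarrow> complex \<Rightarrow> complex" where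
  "c_fun m \<rho> z = z^m - \<rho> * z^(m-1) - \<rho> * z + 1"

definition type1 :: "nat \<Rightarrow> complex \<Rightarrow> complex \<Rightarrow> bool" where
  "type1 n \<rho> z \<longleftrightarrow> s_fun (n+1) \<rho> z = 0 \<and> s_fun (n+1) \<rho> (inverse z) = 0"

definition type2 :: "nat \<Rightarrow> complex \<Rightarrow> complex \<Rightarrow> bool" where
  "type2 n \<rho> z \<longleftrightarrow> c_fun (n+1) \<rho> z = 0 \<and> c_fun (n+1) \<rho> (inverse z) = 0"

end

theory Submission
  imports Defs "HOL-Computational_Algebra.Fundamental_Theorem_Algebra"
begin


lemma sum_count_size:
  fixes M :: "'a multiset"
  assumes "finite X" "set_mset M \<subseteq> X"
  shows "(\<Sum>z\<in>X. count M z) = size M"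
  using assms(2)
proof (induction M)
  case empty
  then show ?case by simp
next
  case (add a M)
  have "(\<Sum>z\<in>X. count (add_mset a M) z) = (\<Sum>z\<in>X. count M z + (if z = a then 1 else 0))"
    by (intro sum.cong) auto
  also have "\<dots> = (\<Sum>z\<in>X. count M z) + (\<Sum>z\<in>X. (if z = a then 1 else 0))"
    by (simp add: sum.distrib)
  also have "(\<Sum>z\<in>X. (if z = a then 1 else 0)) = (1::nat)"
    using add.prems assms(1) by (simp add: sum.delta)
  finally show ?case using add by simp
qed

definition Hsel :: "complex \<Rightarrow> bool" where
  "Hsel z \<longleftrightarrow> cmod z < 1 \<or> (cmod z = 1 \<and> Im z > 0)"

lemma Hsel_inverse:
  assumes "z \<noteq> 0" "z \<noteq> 1" "z \<noteq> -1"
  shows "Hsel (inverse z) \<longleftrightarrow> \<not> Hsel z"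
proof -
  have n: "cmod (inverse z) = inverse (cmod z)" by (simp add: norm_inverse)
  have pos: "cmod z > 0" using assms by simp
  consider "cmod z < 1" | "cmod z > 1" | "cmod z = 1" by linarith
  then show ?thesis
  proof cases
    case 1
    then have "cmod (inverse z) > 1" using n pos by (simp add: one_less_inverse)
    then show ?thesis using 1 by (simp add: Hsel_def)
  next
    case 2
    then have "cmod (inverse z) < 1" using n pos by (simp add: inverse_less_1_iff)
    then show ?thesis using 2 by (simp add: Hsel_def)
  next
    case 3
    have "Im z \<noteq> 0"
    proof
      assume "Im z = 0"
      then have "z = complex_of_real (Re z)" by (simp add: complex_eq_iff)
      moreover have "\<bar>Re z\<bar> = 1" using 3 \<open>Im z = 0\<close> by (simp add: cmod_def)
      ultimately show False using assms by (auto simp: abs_if split: if_splits)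
    qed
    have "Im (inverse z) = - Im z" using 3
      by (simp add: Im_inverse cmod_def) 
    then show ?thesis using 3 n \<open>Im z \<noteq> 0\<close> by (auto simp: Hsel_def)
  qed
qed

lemma half_mset:
  fixes M :: "complex multiset"
  assumes sym: "\<And>z. count M z = count M (inverse z)"
    and nz: "\<And>z. z \<in># M \<Longrightarrow> z \<noteq> 0 \<and> z \<noteq> 1 \<and> z \<noteq> -1"
  shows "\<exists>A. M = A + image_mset inverse A"
proof -
  define A where "A = filter_mset Hsel M"
  have "M = A + image_mset inverse A"
  proof (rule multiset_eqI)
    fix z
    have ci: "count (image_mset inverse A) z = count A (inverse z)"
    proof -
      have "inverse -` {z} = {inverse z}" by (auto simp: inverse_eq_iff_eq)
      then show ?thesis by (cases "inverse z \<in># A") (auto simp: count_image_mset not_in_iff)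
    qed
    show "count M z = count (A + image_mset inverse A) z"
    proof (cases "z \<in># M")
      case True
      then have "Hsel (inverse z) \<longleftrightarrow> \<not> Hsel z" using nz Hsel_inverse by blast
      then show ?thesis using sym[of z] by (simp only: count_union ci) (simp add: A_def)
    next
      case False
      then have "count M (inverse z) = 0" using sym[of z] by (simp add: not_in_iff)
      then show ?thesis using False by (simp only: count_union ci) (simp add: A_def not_in_iff)
    qed
  qed
  then show ?thesis by blast
qed



definition Spoly :: "nat \<Rightarrow> complex \<Rightarrow> complex poly" where
  "Spoly n \<rho> = Polynomial.monom 1 (n+1) + (Polynomial.monom (-\<rho>) n + [:-1, \<rho>:])"
definition Cpoly :: "nat \<Rightarrow> complex \<Rightarrow> complex poly" where
  "Cpoly n \<rho> = Polynomial.monom 1 (n+1) + (Polynomial.monom (-\<rho>) n + [:1, -\<rho>:])"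

lemma poly_Spoly: "poly (Spoly n \<rho>) z = s_fun (n+1) \<rho> z"
  by (simp add: Spoly_def s_fun_def poly_monom algebra_simps)
lemma poly_Cpoly: "poly (Cpoly n \<rho>) z = c_fun (n+1) \<rho> z"
  by (simp add: Cpoly_def c_fun_def poly_monom algebra_simps)

lemma degree_Spoly: assumes "n \<ge> 1" shows "degree (Spoly n \<rho>) = n+1"
proof -
  have "degree (Polynomial.monom (-\<rho>) n + [:-1, \<rho>:]) \<le> n"
    using assms by (intro degree_add_le) (auto simp: degree_monom_le)
  then show ?thesis unfolding Spoly_def
    by (subst degree_add_eq_left) (auto simp: degree_monom_eq)
qed
lemma degree_Cpoly: assumes "n \<ge> 1" shows "degree (Cpoly n \<rho>) = n+1"
proof -
  have "degree (Polynomial.monom (-\<rho>) n + [:1, -\<rho>:]) \<le> n"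
    using assms by (intro degree_add_le) (auto simp: degree_monom_le)
  then show ?thesis unfolding Cpoly_def
    by (subst degree_add_eq_left) (auto simp: degree_monom_eq)
qed

lemma poly_zero_nz:
  fixes p :: "complex poly"
  assumes "\<And>x. x \<noteq> 0 \<Longrightarrow> poly p x = 0"
  shows "p = 0"
proof (rule ccontr)
  assume "p \<noteq> 0"
  then have "finite {x. poly p x = 0}" by (rule poly_roots_finite)
  moreover have "-{0} \<subseteq> {x. poly p x = 0}" using assms by auto
  ultimately have "finite (-{0::complex})" by (rule finite_subset[rotated])
  then have "finite (-{0::complex} \<union> {0})" by simp
  then show False by (simp add: infinite_UNIV_char_0)
qed

lemma reflect_Spoly: assumes "n \<ge> 1" shows "reflect_poly (Spoly n \<rho>) = - Spoly n \<rho>"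
proof -
  have "reflect_poly (Spoly n \<rho>) + Spoly n \<rho> = 0"
  proof (rule poly_zero_nz)
    fix x :: complex assume x: "x \<noteq> 0"
    have "poly (reflect_poly (Spoly n \<rho>)) x = x^(n+1) * s_fun (n+1) \<rho> (inverse x)"
      using x assms by (simp add: poly_reflect_poly_nz degree_Spoly poly_Spoly)
    also have "\<dots> = - s_fun (n+1) \<rho> x"
    proof -
      have "x^(n+1) * (inverse x)^(n+1) = 1" by (simp add: x power_inverse field_simps)
      moreover have "x^(n+1) * (inverse x)^n = x" using x by (simp add: power_inverse field_simps)
      ultimately show ?thesis using x
        by (simp add: s_fun_def algebra_simps)
    qed
    finally show "poly (reflect_poly (Spoly n \<rho>) + Spoly n \<rho>) x = 0"
      by (simp add: poly_Spoly)
  qed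
  then show ?thesis by (simp add: eq_neg_iff_add_eq_0)
qed

lemma reflect_Cpoly: assumes "n \<ge> 1" shows "reflect_poly (Cpoly n \<rho>) = Cpoly n \<rho>"
proof -
  have "reflect_poly (Cpoly n \<rho>) - Cpoly n \<rho> = 0"
  proof (rule poly_zero_nz)
    fix x :: complex assume x: "x \<noteq> 0"
    have "poly (reflect_poly (Cpoly n \<rho>)) x = x^(n+1) * c_fun (n+1) \<rho> (inverse x)"
      using x assms by (simp add: poly_reflect_poly_nz degree_Cpoly poly_Cpoly)
    also have "\<dots> = c_fun (n+1) \<rho> x"
    proof -
      have "x^(n+1) * (inverse x)^(n+1) = 1" by (simp add: x power_inverse field_simps)
      moreover have "x^(n+1) * (inverse x)^n = x" using x by (simp add: power_inverse field_simps)
      ultimately show ?thesis using x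
        by (simp add: c_fun_def algebra_simps)
    qed
    finally show "poly (reflect_poly (Cpoly n \<rho>) - Cpoly n \<rho>) x = 0"
      by (simp add: poly_Cpoly)
  qed
  then show ?thesis by simp
qed

lemma order_reflect_le:
  fixes Q :: "complex poly"
  assumes "reflect_poly Q = Polynomial.smult e Q" "e \<noteq> 0" "Q \<noteq> 0" "a \<noteq> 0"
  shows "order a Q \<le> order (inverse a) Q"
proof -
  define k where "k = order a Q"
  obtain r where r: "Q = [:-a,1:]^k * r" using order_1[of a Q] unfolding k_def by (elim dvdE)
  have rl: "reflect_poly [:-a,1:] = Polynomial.smult (-a) [:-inverse a, 1:]"
    using assms(4) by (simp add: reflect_poly_def)
  have "reflect_poly Q = reflect_poly [:-a,1:] ^ k * reflect_poly r"
    by (simp add: r reflect_poly_mult reflect_poly_power)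
  also have "\<dots> = Polynomial.smult ((-a)^k) ([:-inverse a, 1:]^k * reflect_poly r)"
    by (simp only: rl smult_power mult_smult_left)
  finally have "Polynomial.smult e Q = Polynomial.smult ((-a)^k) ([:-inverse a, 1:]^k * reflect_poly r)"
    using assms(1) by simp
  then have "Q = Polynomial.smult (inverse e * (-a)^k) ([:-inverse a, 1:]^k * reflect_poly r)"
    using assms(2) by (metis smult_smult inverse_eq_divide  left_inverse smult_1_left)
  then have "[:-inverse a, 1:]^k dvd Q" by (metis dvd_smult dvd_triv_left)
  then show ?thesis using assms(3) unfolding k_def by (simp add: order_divides)
qed

lemma order_reflect_eq:
  fixes Q :: "complex poly"
  assumes "reflect_poly Q = Polynomial.smult e Q" "e \<noteq> 0" "Q \<noteq> 0" "a \<noteq> 0"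
  shows "order a Q = order (inverse a) Q"
  using order_reflect_le[OF assms] order_reflect_le[OF assms(1-3), of "inverse a"] assms(4)
  by simp


lemma s_inv:
  assumes x: "(x::complex) \<noteq> 0"
  shows "x^(n+1) * s_fun (n+1) \<rho> (inverse x) = - s_fun (n+1) \<rho> x"
proof -
  have "x^(n+1) * (inverse x)^(n+1) = 1" by (simp add: x power_inverse field_simps)
  moreover have "x^(n+1) * (inverse x)^n = x" using x by (simp add: power_inverse field_simps)
  ultimately show ?thesis using x
    by (simp add: s_fun_def algebra_simps)
qed

lemma c_inv:
  assumes x: "(x::complex) \<noteq> 0"
  shows "x^(n+1) * c_fun (n+1) \<rho> (inverse x) = c_fun (n+1) \<rho> x"
proof -
  have "x^(n+1) * (inverse x)^(n+1) = 1" by (simp add: x power_inverse field_simps)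
  moreover have "x^(n+1) * (inverse x)^n = x" using x by (simp add: power_inverse field_simps)
  ultimately show ?thesis using x
    by (simp add: c_fun_def algebra_simps)
qed

lemma sc_excl:
  assumes "s_fun (n+1) \<rho> z = 0" "c_fun (n+1) \<rho> z = 0"
  shows "\<rho> = 1 \<or> \<rho> = -1"
proof -
  have "s_fun (n+1) \<rho> z - c_fun (n+1) \<rho> z = 2*(\<rho>*z - 1)" by (simp add: s_fun_def c_fun_def algebra_simps)
  then have rz: "\<rho>*z = 1" using assms by simp
  have "s_fun (n+1) \<rho> z + c_fun (n+1) \<rho> z = 2*(z^n*(z-\<rho>))" by (simp add: s_fun_def c_fun_def algebra_simps)
  then have "z^n*(z-\<rho>) = 0" using assms by simp
  moreover have "z \<noteq> 0" using rz by auto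
  ultimately have "z = \<rho>" by simp
  then have "\<rho>^2 = 1" using rz by (simp add: power2_eq_square)
  then show ?thesis by (simp add: power2_eq_1_iff)
qed
lemma alg1:
  fixes a z q d e :: complex
  assumes "q \<noteq> 0" "d \<noteq> 0" "e = 1 \<or> e = -1"
  shows "a*z/(d*(-e*(q*d))) = -e*(z/q*a/d^2)"
  using assms by (auto simp: field_simps power2_eq_square)
lemma alg2:
  fixes a z q d e :: complex
  assumes "q \<noteq> 0" "d \<noteq> 0" "e = 1 \<or> e = -1"
  shows "z/q*a/d^2 = z*q*a/(-e*(q*d))^2"
  using assms by (auto simp: field_simps power2_eq_square)


lemma poly_p2n: "poly (p2n n \<rho>) x = x^(2*n) + (1+\<rho>^2) * (\<Sum>k\<in>{1..n-1}. x^(2*k))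
   - 2*\<rho>*(\<Sum>k\<in>{0..n-1}. x^(2*k+1)) + 1"
  by (simp add: p2n_def poly_sum poly_monom)

lemma tele1: "(\<Sum>k\<in>{1..m}. (x::complex)^(2*k)) * (x^2-1) = x^(2*m+2) - x^2"
proof (induction m)
  case 0 then show ?case by (simp add: power2_eq_square)
next
  case (Suc m)
  have "(\<Sum>k\<in>{1..Suc m}. x^(2*k)) * (x^2-1) = (\<Sum>k\<in>{1..m}. x^(2*k)) * (x^2-1) + x^(2*m+2)*(x^2-1)"
  proof -
    have "(\<Sum>k\<in>{1..Suc m}. x^(2*k)) = (\<Sum>k\<in>{1..m}. x^(2*k)) + x^(2*m+2)"
      by (simp add: sum.cl_ivl_Suc)
    then show ?thesis by (simp only: distrib_right)
  qed
  also have "\<dots> = x^(2*m+2) - x^2 + x^(2*m+2)*(x^2-1)" by (simp only: Suc.IH)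
  also have "\<dots> = x^(2*m+2)*x^2 - x^2" by (simp add: algebra_simps)
  also have "\<dots> = x^(2*Suc m+2) - x^2" by (simp add: power_add[symmetric])
  finally show ?case .
qed

lemma tele2: "(\<Sum>k\<in>{0..m}. (x::complex)^(2*k+1)) * (x^2-1) = x^(2*m+3) - x"
proof (induction m)
  case 0 then show ?case by (simp add: algebra_simps power2_eq_square power3_eq_cube)
next
  case (Suc m)
  have "(\<Sum>k\<in>{0..Suc m}. x^(2*k+1)) * (x^2-1) = (\<Sum>k\<in>{0..m}. x^(2*k+1)) * (x^2-1) + x^(2*m+3)*(x^2-1)"
  proof -
    have "(\<Sum>k\<in>{0..Suc m}. x^(2*k+1)) = (\<Sum>k\<in>{0..m}. x^(2*k+1)) + x^(2*m+3)"
      by (simp add: sum.cl_ivl_Suc power_add power3_eq_cube)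
    then show ?thesis by (simp only: distrib_right)
  qed
  also have "\<dots> = x^(2*m+3) - x + x^(2*m+3)*(x^2-1)" by (simp only: Suc.IH)
  also have "\<dots> = x^(2*m+3)*x^2 - x" by (simp add: algebra_simps)
  also have "\<dots> = x^(2*Suc m+3) - x" by (simp add: power_add[symmetric])
  finally show ?case .
qed

lemma p2n_identity:
  assumes "n \<ge> 1"
  shows "poly (p2n n \<rho>) x * (x^2-1) = s_fun (n+1) \<rho> x * c_fun (n+1) \<rho> x"
proof -
  obtain m where m: "n = Suc m" using assms by (cases n) auto
  define A where "A = (\<Sum>k\<in>{1..m}. x^(2*k))"
  define B where "B = (\<Sum>k\<in>{0..m}. x^(2*k+1))"
  define y where "y = x^m"
  have yy: "y*y = x^(2*m)" by (simp add: y_def power_add[symmetric] mult_2)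
  have hA: "A * (x^2-1) = y*y*x^2 - x^2" using tele1[of x m] unfolding A_def yy
    by (simp add: power_add power2_eq_square)
  have hB: "B * (x^2-1) = y*y*x^3 - x" using tele2[of x m] unfolding B_def yy
    by (simp add: power_add power2_eq_square power3_eq_cube)
  have Pp: "poly (p2n n \<rho>) x = y*y*x^2 + (1+\<rho>^2)*A - 2*\<rho>*B + 1"
    unfolding poly_p2n A_def B_def m by (simp add: yy power_add power2_eq_square)
  have sx: "s_fun (n+1) \<rho> x = y*x*x - \<rho>*y*x + \<rho>*x - 1"
    unfolding s_fun_def y_def m by (simp add: algebra_simps)
  have cx: "c_fun (n+1) \<rho> x = y*x*x - \<rho>*y*x - \<rho>*x + 1"
    unfolding c_fun_def y_def m by (simp add: algebra_simps)
  have "poly (p2n n \<rho>) x * (x^2-1) = y*y*x^2*(x^2-1) + (1+\<rho>^2)*(A*(x^2-1)) - 2*\<rho>*(B*(x^2-1)) + (x^2-1)"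
    unfolding Pp by (simp add: algebra_simps)
  also have "\<dots> = y*y*x^2*(x^2-1) + (1+\<rho>^2)*(y*y*x^2 - x^2) - 2*\<rho>*(y*y*x^3 - x) + (x^2-1)"
    by (simp only: hA hB)
  also have "\<dots> = s_fun (n+1) \<rho> x * c_fun (n+1) \<rho> x"
    unfolding sx cx by (simp add: algebra_simps power2_eq_square power3_eq_cube)
  finally show ?thesis .
qed



lemma geomA: "(\<Sum>k\<in>{0..j}. \<rho>^(j-k) * z^k) * (z-\<rho>) = z^(j+1) - (\<rho>::complex)^(j+1)"
proof (induction j)
  case 0 then show ?case by simp
next
  case (Suc j)
  have "(\<Sum>k\<in>{0..Suc j}. \<rho>^(Suc j-k) * z^k) = (\<Sum>k\<in>{0..j}. \<rho>^(Suc j-k) * z^k) + z^(Suc j)"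
    by (simp add: sum.cl_ivl_Suc)
  also have "(\<Sum>k\<in>{0..j}. \<rho>^(Suc j-k) * z^k) = \<rho> * (\<Sum>k\<in>{0..j}. \<rho>^(j-k) * z^k)"
    by (simp add: sum_distrib_left Suc_diff_le mult.assoc)
  finally have "(\<Sum>k\<in>{0..Suc j}. \<rho>^(Suc j-k) * z^k) * (z-\<rho>) = \<rho> * ((\<Sum>k\<in>{0..j}. \<rho>^(j-k) * z^k) * (z-\<rho>)) + z^(Suc j) * (z-\<rho>)"
    by (simp add: algebra_simps)
  also have "\<dots> = z^(Suc j+1) - \<rho>^(Suc j+1)" unfolding Suc.IH by (simp add: algebra_simps)
  finally show ?case .
qed

lemma geomB: "(\<Sum>k\<in>{j+1..<j+1+m}. \<rho>^(k-j) * z^k) * (1-\<rho>*z) = \<rho>*z^(j+1) - (\<rho>::complex)^(m+1)*z^(j+1+m)"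
proof (induction m)
  case 0 then show ?case by simp
next
  case (Suc m)
  have "(\<Sum>k\<in>{j+1..<j+1+Suc m}. \<rho>^(k-j) * z^k) = (\<Sum>k\<in>{j+1..<j+1+m}. \<rho>^(k-j) * z^k) + \<rho>^(m+1) * z^(j+1+m)"
    by simp
  then have "(\<Sum>k\<in>{j+1..<j+1+Suc m}. \<rho>^(k-j) * z^k) * (1-\<rho>*z) = (\<Sum>k\<in>{j+1..<j+1+m}. \<rho>^(k-j) * z^k) * (1-\<rho>*z) + \<rho>^(m+1) * z^(j+1+m) * (1-\<rho>*z)"
    by (simp add: algebra_simps)
  also have "\<dots> = \<rho>*z^(j+1) - \<rho>^(Suc m+1)*z^(j+1+Suc m)" unfolding Suc.IH by (simp add: algebra_simps)
  finally show ?case .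
qed

definition dd :: "nat \<Rightarrow> nat \<Rightarrow> nat" where "dd j k = (if k \<le> j then j - k else k - j)"

lemma fF:
  assumes "j < n"
  shows "(\<Sum>k\<in>{0..<n}. \<rho>^(dd j k) * z^k) * ((z-\<rho>)*(1-\<rho>*z))
     = (1-\<rho>^2)*z^(j+1) - \<rho>^(j+1)*(1-\<rho>*z) - \<rho>^(n-j)*z^n*(z-(\<rho>::complex))"
proof -
  define A where "A = (\<Sum>k\<in>{0..j}. \<rho>^(j-k) * z^k)"
  define B where "B = (\<Sum>k\<in>{j+1..<j+1+(n-j-1)}. \<rho>^(k-j) * z^k)"
  have split: "{0..<n} = {0..j} \<union> {j+1..<j+1+(n-j-1)}" using assms by auto
  have "(\<Sum>k\<in>{0..<n}. \<rho>^(dd j k) * z^k) = (\<Sum>k\<in>{0..j}. \<rho>^(dd j k) * z^k) + (\<Sum>k\<in>{j+1..<j+1+(n-j-1)}. \<rho>^(dd j k) * z^k)"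
    unfolding split by (subst sum.union_disjoint) auto
  also have "(\<Sum>k\<in>{0..j}. \<rho>^(dd j k) * z^k) = A" unfolding A_def by (intro sum.cong) (auto simp: dd_def)
  also have "(\<Sum>k\<in>{j+1..<j+1+(n-j-1)}. \<rho>^(dd j k) * z^k) = B" unfolding B_def by (intro sum.cong) (auto simp: dd_def)
  finally have fe: "(\<Sum>k\<in>{0..<n}. \<rho>^(dd j k) * z^k) = A + B" .
  have hA: "A * (z-\<rho>) = z^(j+1) - \<rho>^(j+1)" unfolding A_def by (rule geomA)
  have hB: "B * (1-\<rho>*z) = \<rho>*z^(j+1) - \<rho>^(n-j)*z^n"
    unfolding B_def geomB using assms by (simp add: Suc_diff_Suc)
  have "(A+B) * ((z-\<rho>)*(1-\<rho>*z)) = (A * (z-\<rho>))*(1-\<rho>*z) + (B * (1-\<rho>*z))*(z-\<rho>)"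
    by (simp add: algebra_simps)
  also have "\<dots> = (1-\<rho>^2)*z^(j+1) - \<rho>^(j+1)*(1-\<rho>*z) - \<rho>^(n-j)*z^n*(z-\<rho>)"
    unfolding hA hB by (simp add: algebra_simps power2_eq_square)
  finally show ?thesis using fe by simp
qed

lemma gG:
  assumes "j < n"
  shows "(\<Sum>k\<in>{0..<n}. \<rho>^(dd j k) * z^(n-1-k)) = (\<Sum>k\<in>{0..<n}. \<rho>^(dd (n-1-j) k) * (z::complex)^k)"
proof -
  define G where "G i = \<rho>^(dd (n-1-j) i) * z^i" for i
  have "(\<Sum>k\<in>{0..<n}. \<rho>^(dd j k) * z^(n-1-k)) = (\<Sum>k<n. G (n - Suc k))"
    unfolding atLeast0LessThan using assms
    by (intro sum.cong) (auto simp: G_def dd_def)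
  also have "\<dots> = (\<Sum>k<n. G k)" by (rule sum.nat_diff_reindex)
  finally show ?thesis unfolding G_def atLeast0LessThan .
qed

lemma row_identity:
  fixes \<rho> z e :: complex
  assumes "j < n" "e^2 = 1" and W: "z^n*(z-\<rho>) = - e*(1-\<rho>*z)"
  shows "(\<Sum>k\<in>{0..<n}. \<rho>^(dd j k) * (z^k + e * z^(n-1-k))) * ((z-\<rho>)*(1-\<rho>*z))
    = (1-\<rho>^2) * z * (z^j + e * z^(n-1-j))"
proof -
  have s: "(\<Sum>k\<in>{0..<n}. \<rho>^(dd j k) * (z^k + e * z^(n-1-k)))
      = (\<Sum>k\<in>{0..<n}. \<rho>^(dd j k) * z^k) + e * (\<Sum>k\<in>{0..<n}. \<rho>^(dd (n-1-j) k) * z^k)"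
  proof -
    have "(\<Sum>k\<in>{0..<n}. \<rho>^(dd j k) * (z^k + e * z^(n-1-k)))
      = (\<Sum>k\<in>{0..<n}. \<rho>^(dd j k) * z^k) + e * (\<Sum>k\<in>{0..<n}. \<rho>^(dd j k) * z^(n-1-k))"
      by (simp add: sum.distrib sum_distrib_left algebra_simps)
    then show ?thesis unfolding gG[OF assms(1)] .
  qed
  have f1: "(\<Sum>k\<in>{0..<n}. \<rho>^(dd j k) * z^k) * ((z-\<rho>)*(1-\<rho>*z))
     = (1-\<rho>^2)*z^(j+1) - \<rho>^(j+1)*(1-\<rho>*z) - \<rho>^(n-j)*(- e*(1-\<rho>*z))"
    using fF[OF assms(1)] W by (simp add: mult.assoc)
  have f2: "(\<Sum>k\<in>{0..<n}. \<rho>^(dd (n-1-j) k) * z^k) * ((z-\<rho>)*(1-\<rho>*z))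
     = (1-\<rho>^2)*z^(n-j) - \<rho>^(n-j)*(1-\<rho>*z) - \<rho>^(j+1)*(- e*(1-\<rho>*z))"
    using fF[of "n-1-j" n \<rho> z] W assms(1) by (simp add: mult.assoc Suc_diff_Suc)
  have nj: "n - j = Suc (n-1-j)" using assms(1) by simp
  have zz: "z^(n-j) = z * z^(n-1-j)" unfolding nj by (rule power_Suc)
  have "(\<Sum>k\<in>{0..<n}. \<rho>^(dd j k) * (z^k + e * z^(n-1-k))) * ((z-\<rho>)*(1-\<rho>*z))
    = (\<Sum>k\<in>{0..<n}. \<rho>^(dd j k) * z^k) * ((z-\<rho>)*(1-\<rho>*z)) + e * ((\<Sum>k\<in>{0..<n}. \<rho>^(dd (n-1-j) k) * z^k) * ((z-\<rho>)*(1-\<rho>*z)))"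
    unfolding s by (simp add: algebra_simps)
  also have "\<dots> = (1-\<rho>^2) * z * (z^j + e * z^(n-1-j)) + \<rho>^(j+1)*(1-\<rho>*z)*(e^2 - 1)"
    unfolding f1 f2 zz by (simp add: algebra_simps power2_eq_square)
  finally show ?thesis using assms(2) by simp
qed



lemma KMS_eigen:
  fixes \<rho> z e :: complex
  assumes n: "n \<ge> 2" "e^2 = 1" "z^n*(z-\<rho>) = -e*(1-\<rho>*z)" "z \<noteq> 1" "z \<noteq> -1" "z \<noteq> \<rho>" "1-\<rho>*z \<noteq> 0"
  shows "eigenvalue (KMS n \<rho>) ((1-\<rho>^2)*z/((z-\<rho>)*(1-\<rho>*z)))"
proof -
  define v where "v = vec n (\<lambda>j. z^j + e*z^(n-1-j))"
  define D where "D = (z-\<rho>)*(1-\<rho>*z)"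
  have D: "D \<noteq> 0" using n(6,7) by (simp add: D_def)
  have Kv: "KMS n \<rho> *\<^sub>v v = ((1-\<rho>^2)*z/D) \<cdot>\<^sub>v v"
  proof (rule eq_vecI)
    fix j assume "j < dim_vec (((1-\<rho>^2)*z/D) \<cdot>\<^sub>v v)"
    then have j: "j<n" by (simp add: v_def)
    have "(KMS n \<rho> *\<^sub>v v) $ j = (\<Sum>k\<in>{0..<n}. \<rho>^(dd j k) * (z^k + e*z^(n-1-k)))"
      using j by (simp add: KMS_def v_def scalar_prod_def dd_def)
    also have "\<dots> = ((1-\<rho>^2)*z/D) * (z^j + e*z^(n-1-j))"
      using row_identity[OF j n(2,3), folded D_def] D by (simp add: field_simps)
    finally show "(KMS n \<rho> *\<^sub>v v) $ j = (((1-\<rho>^2)*z/D) \<cdot>\<^sub>v v) $ j" using j by (simp add: v_def)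
  next
    show "dim_vec (KMS n \<rho> *\<^sub>v v) = dim_vec (((1-\<rho>^2)*z/D) \<cdot>\<^sub>v v)" by (simp add: KMS_def v_def)
  qed
  have vnz: "v \<noteq> 0\<^sub>v n"
  proof
    assume v: "v = 0\<^sub>v n"
    have "v $ 0 = 0" "v $ 1 = 0" using v n(1) by auto
    then have v0: "1 + e*z^(n-1) = 0" and v1: "z + e*z^(n-2) = 0"
      using n(1) by (auto simp: v_def numeral_2_eq_2)
    have n2: "n - 1 = Suc (n-2)" using n(1) by simp
    have "z^(n-1) = z * z^(n-2)" unfolding n2 by (rule power_Suc)
    then have "z^2 - 1 = z * (z + e*z^(n-2)) - (1 + e*z^(n-1))" by (simp add: algebra_simps power2_eq_square)
    then have "z^2 - 1 = 0" unfolding v0 v1 by simp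
    then have "z^2 = 1" by simp
    then show False using n(4,5) by (simp add: power2_eq_1_iff)
  qed
  show ?thesis unfolding eigenvalue_def eigenvector_def
    by (rule exI[of _ v]) (use Kv vnz in \<open>simp add: v_def KMS_def D_def\<close>)
qed


theorem theorem3p7:
  fixes n :: nat and \<rho> :: complex
  defines "\<xi> \<equiv> complex_of_real ((real n + 1) / (real n - 1))"
  defines "P \<equiv> p2n n \<rho>"
  assumes hn: "n \<ge> 2"
    and h\<rho>: "\<rho> \<notin> {-\<xi>, -1, 1, \<xi>}"
  shows "(\<forall>z. poly P z = 0 \<longrightarrow> z \<noteq> 1 \<and> z \<noteq> -1)
    \<and> (\<forall>z. poly P z = 0 \<longrightarrow>
          (type1 n \<rho> z \<and> \<not> type2 n \<rho> z) \<or> (type2 n \<rho> z \<and> \<not> type1 n \<rho> z))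
    \<and> (\<forall>z. poly P z = 0 \<and> type1 n \<rho> z \<longrightarrow>
          z powi (1 - int n) * (1 - \<rho>^2) / (z - \<rho>)^2 = z^(n+1) * (1 - \<rho>^2) / (1 - \<rho> * z)^2
          \<and> eigenvalue (KMS n \<rho>) (z powi (1 - int n) * (1 - \<rho>^2) / (z - \<rho>)^2))
    \<and> (\<forall>z. poly P z = 0 \<and> type2 n \<rho> z \<longrightarrow>
          - (z powi (1 - int n) * (1 - \<rho>^2) / (z - \<rho>)^2) = - (z^(n+1) * (1 - \<rho>^2) / (1 - \<rho> * z)^2)
          \<and> eigenvalue (KMS n \<rho>) (- (z powi (1 - int n) * (1 - \<rho>^2) / (z - \<rho>)^2)))
    \<and> (\<Sum>z\<in>{z. poly P z = 0 \<and> type1 n \<rho> z}. order z P) = 2 * (n div 2)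
    \<and> (\<Sum>z\<in>{z. poly P z = 0 \<and> type2 n \<rho> z}. order z P) = 2 * nat \<lceil>real n / 2\<rceil>
    \<and> (\<exists>A B :: complex multiset.
          size A = n div 2 \<and> size B = nat \<lceil>real n / 2\<rceil>
          \<and> (\<forall>z. (if type1 n \<rho> z then order z P else 0) = count (A + image_mset inverse A) z)
          \<and> (\<forall>z. (if type2 n \<rho> z then order z P else 0) = count (B + image_mset inverse B) z))"
proof -
  have n1: "n \<ge> 1" using hn by simp
  have r1: "\<rho> \<noteq> 1" "\<rho> \<noteq> -1" "\<rho> \<noteq> \<xi>" "\<rho> \<noteq> -\<xi>" using h\<rho> by auto
  have xi: "\<xi> * (of_nat n - 1) = of_nat n + 1"
  proof -
    have "(real n + 1) / (real n - 1) * (real n - 1) = real n + 1" using hn by simp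
    then have "complex_of_real ((real n + 1) / (real n - 1) * (real n - 1)) = complex_of_real (real n + 1)"
      by simp
    then show ?thesis unfolding \<xi>_def using hn by simp
  qed
  have "(of_nat n :: complex) \<noteq> 1" proof
    assume "(of_nat n :: complex) = 1"
    then have "n = 1" by (simp only: of_nat_eq_1_iff)
    then show False using hn by simp
  qed
  then have nm1: "(of_nat n - 1 :: complex) \<noteq> 0" by simp
  have P1: "poly P 1 = (of_nat n - 1)*\<rho>^2 - 2*of_nat n*\<rho> + (of_nat n + 1)"
    unfolding P_def poly_p2n using n1 by (simp add: of_nat_diff algebra_simps)
  have Pm1: "poly P (-1) = (of_nat n - 1)*\<rho>^2 + 2*of_nat n*\<rho> + (of_nat n + 1)"
  proof -
    have a: "(-1::complex)^(2*k) = 1" for k by simp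
    have b: "(-1::complex)^(2*k+1) = -1" for k by simp
    show ?thesis unfolding P_def poly_p2n a b using n1 by (simp add: of_nat_diff algebra_simps)
  qed
  have P1nz: "poly P 1 \<noteq> 0"
  proof
    assume h: "poly P 1 = 0"
    have "(\<rho> - 1) * ((of_nat n - 1)*\<rho> - (of_nat n + 1)) = poly P 1"
      unfolding P1 by (simp add: algebra_simps power2_eq_square)
    then have "(\<rho> - 1) * ((of_nat n - 1)*\<rho> - (of_nat n + 1)) = 0" using h by simp
    then have "(of_nat n - 1)*\<rho> - (of_nat n + 1) = 0" using r1(1) by simp
    then have "(of_nat n - 1)*\<rho> = (of_nat n - 1) * \<xi>" using xi by (simp add: mult.commute)
    then show False using nm1 r1(3) by simp
  qed
  have Pm1nz: "poly P (-1) \<noteq> 0"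
  proof
    assume h: "poly P (-1) = 0"
    have "(\<rho> + 1) * ((of_nat n - 1)*\<rho> + (of_nat n + 1)) = poly P (-1)"
      unfolding Pm1 by (simp add: algebra_simps power2_eq_square)
    then have "(\<rho> + 1) * ((of_nat n - 1)*\<rho> + (of_nat n + 1)) = 0" using h by simp
    moreover have "\<rho> + 1 \<noteq> 0"
    proof
      assume "\<rho> + 1 = 0"
      then have "\<rho> = -1" by (simp add: eq_neg_iff_add_eq_0)
      then show False using r1(2) by simp
    qed
    ultimately have "(of_nat n - 1)*\<rho> + (of_nat n + 1) = 0" by simp
    then have "(of_nat n - 1)*\<rho> = - (of_nat n + 1)" by (simp only: eq_neg_iff_add_eq_0)
    also have "\<dots> = (of_nat n - 1) * (-\<xi>)" using xi by (simp add: mult.commute)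
    finally have "(of_nat n - 1)*\<rho> = (of_nat n - 1) * (-\<xi>)" .
    then have "\<rho> = -\<xi>" using nm1 by (simp only: mult_cancel_left) simp
    then show False using r1(4) by simp
  qed
  have roots_pm1: "\<forall>z. poly P z = 0 \<longrightarrow> z \<noteq> 1 \<and> z \<noteq> -1" using P1nz Pm1nz by auto

  define S where "S = Spoly n \<rho>"
  define C where "C = Cpoly n \<rho>"
  define X2 where "X2 = [:-1, 0, 1::complex:]"
  have X2z: "poly X2 z = z^2 - 1" for z by (simp add: X2_def power2_eq_square)
  have pS: "poly S z = s_fun (n+1) \<rho> z" for z by (simp add: S_def poly_Spoly)
  have pC: "poly C z = c_fun (n+1) \<rho> z" for z by (simp add: C_def poly_Cpoly)
  have S0: "poly S 0 = -1" using n1 by (simp add: pS s_fun_def)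
  have C0: "poly C 0 = 1" using n1 by (simp add: pC c_fun_def)
  have Snz: "S \<noteq> 0" using S0 by auto
  have Cnz: "C \<noteq> 0" using C0 by auto
  have X2nz: "X2 \<noteq> 0" by (simp add: X2_def)
  have PX: "P * X2 = S * C"
  proof -
    have "poly (P * X2) x = poly (S * C) x" for x
      using p2n_identity[OF n1, of \<rho> x] by (simp add: X2z pS pC P_def)
    then show ?thesis using poly_eq_poly_eq_iff by blast
  qed
  have Pnz: "P \<noteq> 0" using PX Snz Cnz by auto
  have ord: "order z P + order z X2 = order z S + order z C" for z
  proof -
    have "order z (P * X2) = order z (S * C)" using PX by simp
    then show ?thesis using Pnz Snz Cnz X2nz by (simp add: order_mult)
  qed
  have pX2: "proots X2 = {#1#} + {#-1#}"
  proof -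
    have f: "X2 = [:-1,1:] * [:1,1:]" by (simp add: X2_def)
    show ?thesis unfolding f by (subst proots_mult) simp_all
  qed
  have oX1: "order 1 X2 = 1" using pX2 count_proots[OF X2nz, of 1] by simp
  have oXm1: "order (-1) X2 = 1" using pX2 count_proots[OF X2nz, of "-1"] by simp
  have oP1: "order 1 P = 0" using P1nz by (rule order_0I)
  have oPm1: "order (-1) P = 0" using Pm1nz by (rule order_0I)

  have s_type1: "type1 n \<rho> z" if "s_fun (n+1) \<rho> z = 0" for z
  proof -
    have "z \<noteq> 0" using that S0 pS by auto
    then show ?thesis using that s_inv[of z n \<rho>] by (simp add: type1_def)
  qed
  have c_type2: "type2 n \<rho> z" if "c_fun (n+1) \<rho> z = 0" for z
  proof -
    have "z \<noteq> 0" using that C0 pC by auto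
    then show ?thesis using that c_inv[of z n \<rho>] by (simp add: type2_def)
  qed
  have not12: "\<not> (type1 n \<rho> z \<and> type2 n \<rho> z)" for z
    using sc_excl[of n \<rho> z] r1(1,2) by (auto simp: type1_def type2_def)

  have types: "\<forall>z. poly P z = 0 \<longrightarrow>
          (type1 n \<rho> z \<and> \<not> type2 n \<rho> z) \<or> (type2 n \<rho> z \<and> \<not> type1 n \<rho> z)"
  proof (intro allI impI)
    fix z assume z: "poly P z = 0"
    have "s_fun (n+1) \<rho> z * c_fun (n+1) \<rho> z = 0"
      using p2n_identity[OF n1, of \<rho> z] z by (simp add: P_def)
    then have "type1 n \<rho> z \<or> type2 n \<rho> z" using s_type1 c_type2 by auto
    then show "(type1 n \<rho> z \<and> \<not> type2 n \<rho> z) \<or> (type2 n \<rho> z \<and> \<not> type1 n \<rho> z)"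
      using not12[of z] by blast
  qed

  have eig: "z powi (1 - int n) * (1 - \<rho>^2) / (z - \<rho>)^2 = z^(n+1) * (1 - \<rho>^2) / (1 - \<rho> * z)^2
     \<and> eigenvalue (KMS n \<rho>) (- e * (z powi (1 - int n) * (1 - \<rho>^2) / (z - \<rho>)^2))"
    if z: "poly P z = 0" and e: "e = 1 \<or> e = -1" and W: "1 - \<rho>*z = -e * (z^n*(z-\<rho>))" for z e :: complex
  proof -
    have z1: "z \<noteq> 1" "z \<noteq> -1" using roots_pm1 z by auto
    have e2: "e^2 = 1" using e by auto
    have W': "z^n*(z-\<rho>) = -e*(1-\<rho>*z)" using W e by auto
    have zr: "z \<noteq> \<rho>"
    proof
      assume "z = \<rho>"
      then have "1 - \<rho>^2 = 0" using W by (simp add: power2_eq_square)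
      then show False using r1(1,2) by (simp add: power2_eq_1_iff)
    qed
    have rz: "1 - \<rho>*z \<noteq> 0"
    proof
      assume h: "1 - \<rho>*z = 0"
      then have "z^n*(z-\<rho>) = 0" using W' by simp
      moreover have "z \<noteq> 0" using h by auto
      ultimately show False using zr by simp
    qed
    have z0: "z \<noteq> 0"
    proof
      assume "z = 0"
      then show False using W n1 by (simp add: power_0_left)
    qed
    have zn: "z^n \<noteq> 0" using z0 by simp
    have d0: "z - \<rho> \<noteq> 0" using zr by simp
    have ev: "eigenvalue (KMS n \<rho>) ((1-\<rho>^2)*z/((z-\<rho>)*(1-\<rho>*z)))"
      by (rule KMS_eigen[OF hn e2 W' z1 zr rz])
    have pw: "z powi (1 - int n) = z / z^n" using z0 by (simp add: power_int_diff)
    have e1: "(1-\<rho>^2)*z/((z-\<rho>)*(1-\<rho>*z)) = - e * (z powi (1 - int n) * (1 - \<rho>^2) / (z - \<rho>)^2)"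
      unfolding pw W by (rule alg1[OF zn d0 e])
    have zs: "z^(n+1) = z * z^n" by simp
    have e3: "z powi (1 - int n) * (1 - \<rho>^2) / (z - \<rho>)^2 = z^(n+1) * (1 - \<rho>^2) / (1 - \<rho> * z)^2"
      unfolding pw W zs by (rule alg2[OF zn d0 e])
    show ?thesis using ev e1 e3 by simp
  qed
  have eig1: "\<forall>z. poly P z = 0 \<and> type1 n \<rho> z \<longrightarrow>
          z powi (1 - int n) * (1 - \<rho>^2) / (z - \<rho>)^2 = z^(n+1) * (1 - \<rho>^2) / (1 - \<rho> * z)^2
          \<and> eigenvalue (KMS n \<rho>) (z powi (1 - int n) * (1 - \<rho>^2) / (z - \<rho>)^2)"
  proof (intro allI impI)
    fix z assume h: "poly P z = 0 \<and> type1 n \<rho> z"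
    have W: "1 - \<rho>*z = - (-1) * (z^n*(z-\<rho>))"
      using h by (simp add: type1_def s_fun_def algebra_simps)
    show "z powi (1 - int n) * (1 - \<rho>^2) / (z - \<rho>)^2 = z^(n+1) * (1 - \<rho>^2) / (1 - \<rho> * z)^2
          \<and> eigenvalue (KMS n \<rho>) (z powi (1 - int n) * (1 - \<rho>^2) / (z - \<rho>)^2)"
    proof
      have r: "z powi (1 - int n) * (1 - \<rho>^2) / (z - \<rho>)^2 = z^(n+1) * (1 - \<rho>^2) / (1 - \<rho> * z)^2
     \<and> eigenvalue (KMS n \<rho>) (- (-1) * (z powi (1 - int n) * (1 - \<rho>^2) / (z - \<rho>)^2))"
        by (rule eig[of z "-1", OF conjunct1[OF h] _ W]) simp
      show "z powi (1 - int n) * (1 - \<rho>^2) / (z - \<rho>)^2 = z^(n+1) * (1 - \<rho>^2) / (1 - \<rho> * z)^2"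
        using r by (rule conjunct1)
      show "eigenvalue (KMS n \<rho>) (z powi (1 - int n) * (1 - \<rho>^2) / (z - \<rho>)^2)"
        using r[THEN conjunct2] by simp
    qed
  qed
  have eig2: "\<forall>z. poly P z = 0 \<and> type2 n \<rho> z \<longrightarrow>
          - (z powi (1 - int n) * (1 - \<rho>^2) / (z - \<rho>)^2) = - (z^(n+1) * (1 - \<rho>^2) / (1 - \<rho> * z)^2)
          \<and> eigenvalue (KMS n \<rho>) (- (z powi (1 - int n) * (1 - \<rho>^2) / (z - \<rho>)^2))"
  proof (intro allI impI)
    fix z assume h: "poly P z = 0 \<and> type2 n \<rho> z"
    have W: "1 - \<rho>*z = - 1 * (z^n*(z-\<rho>))"
      using h by (simp add: type2_def c_fun_def algebra_simps)
    show "- (z powi (1 - int n) * (1 - \<rho>^2) / (z - \<rho>)^2) = - (z^(n+1) * (1 - \<rho>^2) / (1 - \<rho> * z)^2)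
          \<and> eigenvalue (KMS n \<rho>) (- (z powi (1 - int n) * (1 - \<rho>^2) / (z - \<rho>)^2))"
    proof
      have r: "z powi (1 - int n) * (1 - \<rho>^2) / (z - \<rho>)^2 = z^(n+1) * (1 - \<rho>^2) / (1 - \<rho> * z)^2
     \<and> eigenvalue (KMS n \<rho>) (- 1 * (z powi (1 - int n) * (1 - \<rho>^2) / (z - \<rho>)^2))"
        by (rule eig[of z 1, OF conjunct1[OF h] _ W]) simp
      show "- (z powi (1 - int n) * (1 - \<rho>^2) / (z - \<rho>)^2) = - (z^(n+1) * (1 - \<rho>^2) / (1 - \<rho> * z)^2)"
        using r[THEN conjunct1] by simp
      show "eigenvalue (KMS n \<rho>) (- (z powi (1 - int n) * (1 - \<rho>^2) / (z - \<rho>)^2))"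
        using r[THEN conjunct2] by simp
    qed
  qed
  define M1 where "M1 = filter_mset (\<lambda>z. z \<noteq> 1 \<and> z \<noteq> -1) (proots S)"
  define M2 where "M2 = filter_mset (\<lambda>z. z \<noteq> 1 \<and> z \<noteq> -1) (proots C)"
  have cM1: "count M1 z = (if z \<noteq> 1 \<and> z \<noteq> -1 then order z S else 0)" for z
    using Snz by (simp add: M1_def)
  have cM2: "count M2 z = (if z \<noteq> 1 \<and> z \<noteq> -1 then order z C else 0)" for z
    using Cnz by (simp add: M2_def)
  have key1: "(if type1 n \<rho> z then order z P else 0) = count M1 z" for z
  proof (cases "type1 n \<rho> z")
    case True
    then have sz: "s_fun (n+1) \<rho> z = 0" by (simp add: type1_def)
    have cz: "c_fun (n+1) \<rho> z \<noteq> 0" using sc_excl[of n \<rho> z] sz r1(1,2) by auto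
    have oC: "order z C = 0" using cz pC by (simp add: order_0I)
    show ?thesis
    proof (cases "z = 1 \<or> z = -1")
      case True
      then have "order z P = 0" using oP1 oPm1 by auto
      then show ?thesis using True \<open>type1 n \<rho> z\<close> cM1 by auto
    next
      case False
      then have "poly X2 z \<noteq> 0" by (simp add: X2z power2_eq_1_iff)
      then have "order z X2 = 0" by (rule order_0I)
      then have "order z P = order z S" using ord[of z] oC by simp
      then show ?thesis using False \<open>type1 n \<rho> z\<close> cM1 by auto
    qed
  next
    case False
    have "count M1 z = 0"
    proof (rule ccontr)
      assume "count M1 z \<noteq> 0"
      then have "order z S \<noteq> 0" using cM1[of z] by (auto split: if_splits)
      then have "poly S z = 0" using order_root by blast
      then have "type1 n \<rho> z" using s_type1 pS by simp
      then show False using False by simp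
    qed
    then show ?thesis using False by simp
  qed
  have key2: "(if type2 n \<rho> z then order z P else 0) = count M2 z" for z
  proof (cases "type2 n \<rho> z")
    case True
    then have cz: "c_fun (n+1) \<rho> z = 0" by (simp add: type2_def)
    have sz: "s_fun (n+1) \<rho> z \<noteq> 0" using sc_excl[of n \<rho> z] cz r1(1,2) by auto
    have oS: "order z S = 0" using sz pS by (simp add: order_0I)
    show ?thesis
    proof (cases "z = 1 \<or> z = -1")
      case True
      then have "order z P = 0" using oP1 oPm1 by auto
      then show ?thesis using True \<open>type2 n \<rho> z\<close> cM2 by auto
    next
      case False
      then have "poly X2 z \<noteq> 0" by (simp add: X2z power2_eq_1_iff)
      then have "order z X2 = 0" by (rule order_0I)
      then have "order z P = order z C" using ord[of z] oS by simp
      then show ?thesis using False \<open>type2 n \<rho> z\<close> cM2 by auto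
    qed
  next
    case False
    have "count M2 z = 0"
    proof (rule ccontr)
      assume "count M2 z \<noteq> 0"
      then have "order z C \<noteq> 0" using cM2[of z] by (auto split: if_splits)
      then have "poly C z = 0" using order_root by blast
      then have "type2 n \<rho> z" using c_type2 pC by simp
      then show False using False by simp
    qed
    then show ?thesis using False by simp
  qed
  have sumM: "(\<Sum>z\<in>{z. poly P z = 0 \<and> T z}. order z P) = size M"
    if key: "\<And>z. (if T z then order z P else 0) = count M z" for T M
  proof -
    have fin: "finite {z. poly P z = 0 \<and> T z}"
      using poly_roots_finite[OF Pnz] by (rule finite_subset[rotated]) auto
    have "(\<Sum>z\<in>{z. poly P z = 0 \<and> T z}. order z P) = (\<Sum>z\<in>{z. poly P z = 0 \<and> T z}. count M z)"
    proof (rule sum.cong[OF refl])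
      fix x assume "x \<in> {z. poly P z = 0 \<and> T z}"
      then have "T x" by simp
      then show "order x P = count M x" using key[of x] by simp
    qed
    also have "\<dots> = size M"
    proof (rule sum_count_size[OF fin])
      show "set_mset M \<subseteq> {z. poly P z = 0 \<and> T z}"
      proof
        fix z assume "z \<in># M"
        then have c: "count M z \<noteq> 0" by simp
        have "T z"
        proof (rule ccontr)
          assume "\<not> T z"
          then have "count M z = 0" using key[of z] by simp
          then show False using c by simp
        qed
        moreover have "order z P \<noteq> 0" using key[of z] c \<open>T z\<close> by simp
        ultimately show "z \<in> {z. poly P z = 0 \<and> T z}" using order_root by blast
      qed
    qed
    finally show ?thesis .
  qed
  have s1: "s_fun (n+1) \<rho> 1 = 0" by (simp add: s_fun_def)
  have oS1: "order 1 S = 1" and oC1: "order 1 C = 0"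
  proof -
    have "order 1 S \<noteq> 0" using order_root[of S 1] s1 pS Snz by simp
    moreover have "order 1 S + order 1 C = 1" using ord[of 1] oP1 oX1 by simp
    ultimately show "order 1 S = 1" "order 1 C = 0" by auto
  qed
  have oSCm1: "order (-1) S = (if odd n then 1 else 0) \<and> order (-1) C = (if odd n then 0 else 1)"
  proof -
    have sum: "order (-1) S + order (-1) C = 1" using ord[of "-1"] oPm1 oXm1 by simp
    show ?thesis
    proof (cases "odd n")
      case True
      then have "s_fun (n+1) \<rho> (-1) = 0" by (simp add: s_fun_def)
      then have "order (-1) S \<noteq> 0" using order_root[of S "-1"] pS Snz by simp
      then show ?thesis using sum True by auto
    next
      case False
      then have "c_fun (n+1) \<rho> (-1) = 0" by (simp add: c_fun_def)
      then have "order (-1) C \<noteq> 0" using order_root[of C "-1"] pC Cnz by simp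
      then show ?thesis using sum False by auto
    qed
  qed
  have oSm1: "order (-1) S = (if odd n then 1 else 0)" using oSCm1 by blast
  have oCm1: "order (-1) C = (if odd n then 0 else 1)" using oSCm1 by blast
  have sizeM: "size (filter_mset (\<lambda>z. z \<noteq> 1 \<and> z \<noteq> -1) (proots Q)) + order 1 Q + order (-1) Q = degree Q"
    if "Q \<noteq> 0" for Q :: "complex poly"
  proof -
    have "size (proots Q) = size (filter_mset (\<lambda>z. z \<noteq> 1 \<and> z \<noteq> -1) (proots Q))
       + size (filter_mset (\<lambda>z. \<not> (z \<noteq> 1 \<and> z \<noteq> -1)) (proots Q))"
      using arg_cong[where f=size, OF multiset_partition[of "proots Q" "\<lambda>z. z \<noteq> 1 \<and> z \<noteq> -1"]]
      by (simp only: size_union)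
    moreover have "size (filter_mset (\<lambda>z. \<not> (z \<noteq> 1 \<and> z \<noteq> -1)) (proots Q)) = order 1 Q + order (-1) Q"
    proof -
      have "size (filter_mset (\<lambda>z. \<not> (z \<noteq> 1 \<and> z \<noteq> -1)) (proots Q))
          = (\<Sum>z\<in>{1,-1}. count (filter_mset (\<lambda>z. \<not> (z \<noteq> 1 \<and> z \<noteq> -1)) (proots Q)) z)"
        by (rule sum_count_size[symmetric]) auto
      also have "\<dots> = order 1 Q + order (-1) Q" using that by simp
      finally show ?thesis .
    qed
    ultimately show ?thesis using size_proots_complex[of Q] by simp
  qed
  have degS: "degree S = n+1" using degree_Spoly[OF n1] by (simp add: S_def)
  have degC: "degree C = n+1" using degree_Cpoly[OF n1] by (simp add: C_def)
  have hM1: "size M1 + 1 + (if odd n then 1 else 0) = n + 1"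
    using sizeM[OF Snz] oS1 oSm1 degS unfolding M1_def by simp
  have hM2: "size M2 + (if odd n then 0 else 1) = n + 1"
    using sizeM[OF Cnz] oC1 oCm1 degC unfolding M2_def by simp
  have sM1: "size M1 = 2 * (n div 2)"
  proof (cases "odd n")
    case True
    then have "size M1 + 2 = n + 1" using hM1 by simp
    then show ?thesis using True by presburger
  next
    case False
    then have "size M1 + 1 = n + 1" using hM1 by simp
    then show ?thesis using False by presburger
  qed
  have sM2: "size M2 = 2 * ((n+1) div 2)"
  proof (cases "odd n")
    case True
    then have "size M2 = n + 1" using hM2 by simp
    then show ?thesis using True by presburger
  next
    case False
    then have "size M2 + 1 = n + 1" using hM2 by simp
    then show ?thesis using False by presburger
  qed
  have ceil: "nat \<lceil>real n / 2\<rceil> = (n+1) div 2"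
  proof -
    have "\<lceil>real n / 2\<rceil> = int ((n+1) div 2)"
    proof (cases "even n")
      case True
      then obtain m where m: "n = 2*m" by (elim evenE)
      have "real n / 2 = real m" using m by simp
      moreover have "(n+1) div 2 = m" using m by simp
      ultimately show ?thesis by simp
    next
      case False
      then obtain m where m: "n = 2*m+1" by (elim oddE)
      have "(n+1) div 2 = m + 1" using m by simp
      moreover have "\<lceil>real n / 2\<rceil> = int m + 1"
        by (rule ceiling_unique) (simp_all add: m)
      ultimately show ?thesis by simp
    qed
    then show ?thesis by simp
  qed
  have inv_pm1: "(inverse z \<noteq> 1 \<and> inverse z \<noteq> -1) \<longleftrightarrow> (z \<noteq> 1 \<and> z \<noteq> -1)" for z :: complex
  proof -
    have "inverse z = 1 \<longleftrightarrow> z = 1" using inverse_eq_iff_eq[of z 1] by simp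
    moreover have "inverse z = -1 \<longleftrightarrow> z = -1" using inverse_eq_iff_eq[of z "-1"] by simp
    ultimately show ?thesis by blast
  qed
  have symM: "count M z = count M (inverse z)"
    if cM: "\<And>z. count M z = (if z \<noteq> 1 \<and> z \<noteq> -1 then order z Q else 0)"
      and rQ: "reflect_poly Q = Polynomial.smult e Q" and e: "e \<noteq> 0" and Q: "Q \<noteq> 0"
    for z :: complex and M Q e
  proof (cases "z = 0")
    case True then show ?thesis by simp
  next
    case False
    then show ?thesis using order_reflect_eq[OF rQ e Q False] cM[of z] cM[of "inverse z"] inv_pm1[of z]
      by simp
  qed
  have nzM: "z \<noteq> 0 \<and> z \<noteq> 1 \<and> z \<noteq> -1"
    if cM: "\<And>z. count M z = (if z \<noteq> 1 \<and> z \<noteq> -1 then order z Q else 0)"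
      and Q0: "poly Q 0 \<noteq> 0" and zM: "z \<in># M"
    for z :: complex and M Q
  proof -
    have "count M z \<noteq> 0" using zM by simp
    then show ?thesis using cM[of z] cM[of 0] Q0 order_0I[of Q 0] by (auto split: if_splits)
  qed
  have rS: "reflect_poly S = Polynomial.smult (-1) S" using reflect_Spoly[OF n1] by (simp add: S_def)
  have rC: "reflect_poly C = Polynomial.smult 1 C" using reflect_Cpoly[OF n1] by (simp add: C_def)
  have neg1: "(-1::complex) \<noteq> 0" and one1: "(1::complex) \<noteq> 0" by simp_all
  have "\<exists>A. M1 = A + image_mset inverse A"
  proof (rule half_mset)
    show "count M1 z = count M1 (inverse z)" for z by (rule symM[OF cM1 rS neg1 Snz])
    show "z \<noteq> 0 \<and> z \<noteq> 1 \<and> z \<noteq> -1" if "z \<in># M1" for z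
      using nzM[OF cM1 _ that] S0 by simp
  qed
  then obtain A where A: "M1 = A + image_mset inverse A" by blast
  have "\<exists>B. M2 = B + image_mset inverse B"
  proof (rule half_mset)
    show "count M2 z = count M2 (inverse z)" for z by (rule symM[OF cM2 rC one1 Cnz])
    show "z \<noteq> 0 \<and> z \<noteq> 1 \<and> z \<noteq> -1" if "z \<in># M2" for z
      using nzM[OF cM2 _ that] C0 by simp
  qed
  then obtain B where B: "M2 = B + image_mset inverse B" by blast
  have sA: "size A = n div 2" using sM1 A by simp
  have sB: "size B = nat \<lceil>real n / 2\<rceil>" using sM2 B ceil by simp
  have kA: "count M1 z = count (A + image_mset inverse A) z" for z
    using A by (rule arg_cong)
  have kB: "count M2 z = count (B + image_mset inverse B) z" for z
    using B by (rule arg_cong)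
  have k1: "(if type1 n \<rho> z then order z P else 0) = count (A + image_mset inverse A) z" for z
    using key1[of z] kA[of z] by (rule trans)
  have k2: "(if type2 n \<rho> z then order z P else 0) = count (B + image_mset inverse B) z" for z
    using key2[of z] kB[of z] by (rule trans)
  have ex: "\<exists>A B :: complex multiset.
          size A = n div 2 \<and> size B = nat \<lceil>real n / 2\<rceil>
          \<and> (\<forall>z. (if type1 n \<rho> z then order z P else 0) = count (A + image_mset inverse A) z)
          \<and> (\<forall>z. (if type2 n \<rho> z then order z P else 0) = count (B + image_mset inverse B) z)"
  proof (rule exI[of _ A], rule exI[of _ B], intro conjI)
    show "size A = n div 2" by (rule sA)
    show "size B = nat \<lceil>real n / 2\<rceil>" by (rule sB)
    show "\<forall>z. (if type1 n \<rho> z then order z P else 0) = count (A + image_mset inverse A) z"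
      using k1 by blast
    show "\<forall>z. (if type2 n \<rho> z then order z P else 0) = count (B + image_mset inverse B) z"
      using k2 by blast
  qed
  have sum1: "(\<Sum>z\<in>{z. poly P z = 0 \<and> type1 n \<rho> z}. order z P) = 2 * (n div 2)"
    using sumM[of "type1 n \<rho>" M1, OF key1] sM1 by simp
  have sum2: "(\<Sum>z\<in>{z. poly P z = 0 \<and> type2 n \<rho> z}. order z P) = 2 * nat \<lceil>real n / 2\<rceil>"
    using sumM[of "type2 n \<rho>" M2, OF key2] sM2 ceil by simp
  show ?thesis using roots_pm1 types eig1 eig2 sum1 sum2 ex by (intro conjI) assumption+
qed

end
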